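(* Let $\psi(\bm{x},\bm{y})$ be a quantifier-free Presburger formula with $\bm{x}$ ranging over $\mathbb{Z}^n$ and $\bm{y}$ over $\mathbb{Z}^m$, let $\gamma$ be the sentence $\forall\bm{y}\,\exists\bm{x}\colon\psi(\bm{x},\bm{y})$, and let $\Gamma(\bm{y})$ be the formula $\exists\bm{x}\colon\psi(\bm{x},\bm{y})$. Define the formula $\varphi((x,\bar{\bm{x}}),(y,\bar{\bm{y}}))$, where $x,y$ are single variables and $\bar{\bm{x}},\bar{\bm{y}}$ are vectors of $m$ variables, by $$\varphi\coloneqq (x<0\wedge y<0)\vee(x>0\wedge y>0)\vee(x<0\wedge y=0)\vee(x=0\wedge y>0)\vee(x=0\wedge y=0)\vee(x<0\wedge y>0\wedge\Gamma(\bar{\bm{y}})).$$ Then the relation on $\mathbb{Z}^{1+m}$ defined by $\varphi$ is a well-quasi-ordering if and only if $\gamma$ is true, i.e. $\Gamma(\bm{w})$ holds for every $\bm{w}\in\mathbb{Z}^m$.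
   Context: Presburger formulas are over $\langle\mathbb{Z};+,<,(\equiv_m)_m,0,1\rangle$; quantifier-free formulas are Boolean combinations of linear inequalities and modulo constraints. A well-quasi-ordering on a set $X$ is a reflexive and transitive relation $\le$ on $X$ such that every infinite sequence $x_1,x_2,\ldots\in X$ has $i<j$ with $x_i\le x_j$. *)

theory Defs
  imports Main
begin

text \<open>Terms are built from variables, 0, 1, + (and unary minus, which is definable
  in quantifier-free Presburger arithmetic by moving summands across relations).\<close>

datatype pterm = PVar nat | PZero | POne | PPlus pterm pterm | PNeg pterm

datatype qf_pres =
    PTrue
  | PLess pterm pterm
  | PCong nat pterm pterm
  | PNot qf_pres
  | PAnd qf_pres qf_pres
  | POr qf_pres qf_pres

fun teval :: "pterm \<Rightarrow> int list \<Rightarrow> int" where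
  "teval (PVar i) e = e ! i"
| "teval PZero e = 0"
| "teval POne e = 1"
| "teval (PPlus s t) e = teval s e + teval t e"
| "teval (PNeg t) e = - teval t e"

fun peval :: "qf_pres \<Rightarrow> int list \<Rightarrow> bool" where
  "peval PTrue e = True"
| "peval (PLess s t) e = (teval s e < teval t e)"
| "peval (PCong k s t) e = (teval s e mod int k = teval t e mod int k)"
| "peval (PNot f) e = (\<not> peval f e)"
| "peval (PAnd f g) e = (peval f e \<and> peval g e)"
| "peval (POr f g) e = (peval f e \<or> peval g e)"

fun tvars :: "pterm \<Rightarrow> nat set" where
  "tvars (PVar i) = {i}"
| "tvars PZero = {}"
| "tvars POne = {}"
| "tvars (PPlus s t) = tvars s \<union> tvars t"
| "tvars (PNeg t) = tvars t"

fun pvars :: "qf_pres \<Rightarrow> nat set" where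
  "pvars PTrue = {}"
| "pvars (PLess s t) = tvars s \<union> tvars t"
| "pvars (PCong k s t) = tvars s \<union> tvars t"
| "pvars (PNot f) = pvars f"
| "pvars (PAnd f g) = pvars f \<union> pvars g"
| "pvars (POr f g) = pvars f \<union> pvars g"

definition wqo_on :: "('a \<Rightarrow> 'a \<Rightarrow> bool) \<Rightarrow> 'a set \<Rightarrow> bool" where
  "wqo_on le X \<longleftrightarrow>
     (\<forall>x\<in>X. le x x) \<and>
     (\<forall>x\<in>X. \<forall>y\<in>X. \<forall>z\<in>X. le x y \<longrightarrow> le y z \<longrightarrow> le x z) \<and>
     (\<forall>f :: nat \<Rightarrow> 'a. (\<forall>i. f i \<in> X) \<longrightarrow> (\<exists>i j. i < j \<and> le (f i) (f j)))"

text \<open>psi(x,y) with x in Z^n (variables 0..n-1) and y in Z^m (variables n..n+m-1);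
  the environment is the concatenation x @ y.\<close>

definition Gamma :: "qf_pres \<Rightarrow> nat \<Rightarrow> int list \<Rightarrow> bool" where
  "Gamma \<psi> n ys \<longleftrightarrow> (\<exists>xs. length xs = n \<and> peval \<psi> (xs @ ys))"

text \<open>phi((x, xbar), (y, ybar)) on Z^(1+m), elements represented as lists of length 1+m.\<close>

definition phi_rel :: "qf_pres \<Rightarrow> nat \<Rightarrow> int list \<Rightarrow> int list \<Rightarrow> bool" where
  "phi_rel \<psi> n u v \<longleftrightarrow>
     (let x = hd u; y = hd v; ybar = tl v in
       (x < 0 \<and> y < 0) \<or> (x > 0 \<and> y > 0) \<or> (x < 0 \<and> y = 0) \<or> (x = 0 \<and> y > 0)
       \<or> (x = 0 \<and> y = 0) \<or> (x < 0 \<and> y > 0 \<and> Gamma \<psi> n ybar))"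

end

theory Submission
  imports Defs
begin

theorem lemma5p1:
  fixes \<psi> :: qf_pres and n m :: nat
  assumes "pvars \<psi> \<subseteq> {..<n + m}"
  shows "wqo_on (phi_rel \<psi> n) {v :: int list. length v = Suc m}
         \<longleftrightarrow> (\<forall>w :: int list. length w = m \<longrightarrow> Gamma \<psi> n w)"
proof
  assume W: "wqo_on (phi_rel \<psi> n) {v :: int list. length v = Suc m}"
  show "\<forall>w :: int list. length w = m \<longrightarrow> Gamma \<psi> n w"
  proof (intro allI impI)
    fix w :: "int list" assume L: "length w = m"
    have "phi_rel \<psi> n [-1] [0]" "phi_rel \<psi> n [0] (1 # w)"
      by (auto simp: phi_rel_def)
    hence "phi_rel \<psi> n (-1 # replicate m 0) (0 # replicate m 0)"
          "phi_rel \<psi> n (0 # replicate m 0) (1 # w)"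
      by (auto simp: phi_rel_def)
    note ab = this
    have m: "(-1 # replicate m 0) \<in> {v :: int list. length v = Suc m}"
      "(0 # replicate m 0) \<in> {v :: int list. length v = Suc m}"
      "(1 # w) \<in> {v :: int list. length v = Suc m}" using L by auto
    have T: "\<forall>x\<in>{v :: int list. length v = Suc m}. \<forall>y\<in>{v :: int list. length v = Suc m}.
            \<forall>z\<in>{v :: int list. length v = Suc m}.
               phi_rel \<psi> n x y \<longrightarrow> phi_rel \<psi> n y z \<longrightarrow> phi_rel \<psi> n x z"
      using W unfolding wqo_on_def by blast
    have "phi_rel \<psi> n (-1 # replicate m 0) (1 # w)"
      using T[rule_format, OF m(1) m(2) m(3) ab(1) ab(2)] .
    thus "Gamma \<psi> n w" by (simp add: phi_rel_def)
  qed
next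
  assume G: "\<forall>w :: int list. length w = m \<longrightarrow> Gamma \<psi> n w"
  have key: "\<And>u v. length v = Suc m \<Longrightarrow> phi_rel \<psi> n u v \<longleftrightarrow> sgn (hd u) \<le> sgn (hd v)"
  proof -
    fix u v :: "int list" assume "length v = Suc m"
    hence "Gamma \<psi> n (tl v)" using G by simp
    thus "phi_rel \<psi> n u v \<longleftrightarrow> sgn (hd u) \<le> sgn (hd v)"
      by (auto simp: phi_rel_def sgn_if)
  qed
  show "wqo_on (phi_rel \<psi> n) {v :: int list. length v = Suc m}"
    unfolding wqo_on_def
  proof (intro conjI ballI allI impI)
    fix x assume "x \<in> {v :: int list. length v = Suc m}"
    thus "phi_rel \<psi> n x x" using key by simp
  next
    fix x y z assume "x \<in> {v :: int list. length v = Suc m}" "y \<in> {v :: int list. length v = Suc m}"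
      "z \<in> {v :: int list. length v = Suc m}" "phi_rel \<psi> n x y" "phi_rel \<psi> n y z"
    hence "sgn (hd x) \<le> sgn (hd y)" "sgn (hd y) \<le> sgn (hd z)" using key by auto
    thus "phi_rel \<psi> n x z" using key \<open>z \<in> _\<close> by simp
  next
    fix f :: "nat \<Rightarrow> int list" assume F: "\<forall>i. f i \<in> {v. length v = Suc m}"
    hence K: "\<And>i j. phi_rel \<psi> n (f i) (f j) \<longleftrightarrow> sgn (hd (f i)) \<le> sgn (hd (f j))"
      using key by simp
    have s: "\<And>i. sgn (hd (f i)) \<in> {-1,0,1::int}" by (simp add: sgn_if)
    show "\<exists>i j. i < j \<and> phi_rel \<psi> n (f i) (f j)"
    proof (rule ccontr)
      assume "\<not> ?thesis"
      hence D: "\<And>i j. i < j \<Longrightarrow> sgn (hd (f j)) < sgn (hd (f i))" using K by (meson not_le)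
      have "sgn (hd (f 3)) < sgn (hd (f 2))" "sgn (hd (f 2)) < sgn (hd (f 1))" "sgn (hd (f 1)) < sgn (hd (f 0))"
        using D by auto
      moreover have "sgn (hd (f 0)) \<le> 1" "-1 \<le> sgn (hd (f 3))" using s[of 0] s[of 3] by auto
      ultimately show False by linarith
    qed
  qed
qed

end
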